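(* For a causal stable system $P$ on $\mathcal{L}_{2e+}^n$, $\theta(P)\le\theta_e(P)$. Moreover, if $\theta(P)\in[0,\pi/2]$, then $\theta(P)=\theta_e(P)$.
   Context: $\mathcal{L}_2^n$: measurable $u:\mathbb{R}\to\mathbb{R}^n$ with $\|u\|_2^2=\int|u(t)|^2dt<\infty$, inner product $\langle u,v\rangle=\int u(t)^Tv(t)\,dt$; $\mathcal{L}_{2+}=\{u\in\mathcal{L}_2:u(t)=0\ \text{for}\ t<0\}$. For $T\ge0$, $(\Gamma_Tu)(t)=u(t)$ for $t\le T$, $0$ for $t>T$, and $u_T=\Gamma_Tu$; $\mathcal{L}_{2e+}=\{u:u_T\in\mathcal{L}_{2+}\ \forall T\ge0\}$. A system is an operator $P:\mathcal{L}_{2e+}\to\mathcal{L}_{2e+}$ with $P0=0$, $P\ne0$; causal if $\Gamma_TP=\Gamma_TP\Gamma_T$ for all $T\ge0$; a causal system is stable if $Pu\in\mathcal{L}_{2+}$ for all $u\in\mathcal{L}_{2+}$ and $\sup_{0\ne u\in\mathcal{L}_{2+}}\|Pu\|_2/\|u\|_2<\infty$. The singular angle $\theta(P)\in[0,\pi]$ is given by $\cos\theta(P)=\inf\{\langle u,Pu\rangle/(\|u\|_2\|Pu\|_2):0\neq u\in\mathcal{L}_{2+},\ Pu\ne0\}$. The $\mathcal{L}_{2e}$ singular angle $\theta_e(P)\in[0,\pi]$ is given by $\cos\theta_e(P)=\inf\{\langle u_T,(Pu)_T\rangle/(\|u_T\|_2\|(Pu)_T\|_2): u\in\mathcal{L}_{2e+},\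 T>0,\ \|u_T\|_2\ne0,\ \|(Pu)_T\|_2\ne0\}$. *)

theory Defs
  imports "HOL-Analysis.Analysis"
begin

type_synonym 'n signal = "real \<Rightarrow> real ^ 'n"

definition L2 :: "'n::finite signal \<Rightarrow> bool" where
  "L2 u \<longleftrightarrow> u \<in> borel_measurable lborel \<and> integrable lborel (\<lambda>t. (norm (u t))\<^sup>2)"

definition L2p :: "'n::finite signal \<Rightarrow> bool" where
  "L2p u \<longleftrightarrow> L2 u \<and> (\<forall>t<0. u t = 0)"

definition trunc :: "real \<Rightarrow> 'n::finite signal \<Rightarrow> 'n signal" where
  "trunc T u = (\<lambda>t. if t \<le> T then u t else 0)"

definition L2ep :: "'n::finite signal \<Rightarrow> bool" where
  "L2ep u \<longleftrightarrow> (\<forall>T\<ge>0. L2p (trunc T u))"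

definition ip :: "'n::finite signal \<Rightarrow> 'n signal \<Rightarrow> real" where
  "ip u v = (LINT t|lborel. u t \<bullet> v t)"

definition nrm :: "'n::finite signal \<Rightarrow> real" where
  "nrm u = sqrt (LINT t|lborel. (norm (u t))\<^sup>2)"

text \<open>Signals are identified up to equality almost everywhere (as elements of L2).\<close>

definition is_system :: "('n::finite signal \<Rightarrow> 'n signal) \<Rightarrow> bool" where
  "is_system P \<longleftrightarrow> (\<forall>u. L2ep u \<longrightarrow> L2ep (P u))
     \<and> (AE t in lborel. P (\<lambda>_. 0) t = 0)
     \<and> (\<exists>u. L2ep u \<and> \<not> (AE t in lborel. P u t = 0))"

definition causal :: "('n::finite signal \<Rightarrow> 'n signal) \<Rightarrow> bool" where
  "causal P \<longleftrightarrow> (\<forall>u T. L2ep u \<and> T \<ge> 0 \<longrightarrow>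
     (AE t in lborel. trunc T (P u) t = trunc T (P (trunc T u)) t))"

definition stable :: "('n::finite signal \<Rightarrow> 'n signal) \<Rightarrow> bool" where
  "stable P \<longleftrightarrow> (\<forall>u. L2p u \<longrightarrow> L2p (P u))
     \<and> (\<exists>C. \<forall>u. L2p u \<and> nrm u \<noteq> 0 \<longrightarrow> nrm (P u) / nrm u \<le> C)"

definition sangle :: "('n::finite signal \<Rightarrow> 'n signal) \<Rightarrow> real" where
  "sangle P = arccos (Inf {ip u (P u) / (nrm u * nrm (P u)) | u.
       L2p u \<and> nrm u \<noteq> 0 \<and> nrm (P u) \<noteq> 0})"

definition sangle_e :: "('n::finite signal \<Rightarrow> 'n signal) \<Rightarrow> real" where
  "sangle_e P = arccos (Inf {ip (trunc T u) (trunc T (P u)) / (nrm (trunc T u) * nrm (trunc T (P u))) | u T.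
       L2ep u \<and> T > 0 \<and> nrm (trunc T u) \<noteq> 0 \<and> nrm (trunc T (P u)) \<noteq> 0})"

end

theory Submission imports Defs begin

lemma L2_meas: "L2 f \<Longrightarrow> f \<in> borel_measurable borel"
  by (simp add: L2_def)

lemma trunc_meas: "f \<in> borel_measurable borel \<Longrightarrow> trunc T f \<in> borel_measurable borel"
proof -
  assume f: "f \<in> borel_measurable borel"
  have e: "trunc T f = (\<lambda>t. if t \<in> {..T} then f t else 0)" by (auto simp: trunc_def)
  show ?thesis unfolding e
    by (rule measurable_If_set) (use f in auto)
qed

lemma L2_trunc: "L2 f \<Longrightarrow> L2 (trunc T f)"
proof -
  assume a: "L2 f"
  have m: "trunc T f \<in> borel_measurable borel" using a trunc_meas L2_meas by blast
  have "integrable lborel (\<lambda>t. (norm (trunc T f t))\<^sup>2)"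
    apply (rule Bochner_Integration.integrable_bound[where f="\<lambda>t. (norm (f t))\<^sup>2"])
    using a m by (auto simp: trunc_def L2_def)
  then show ?thesis using m by (simp add: L2_def)
qed

lemma L2p_trunc: "L2p f \<Longrightarrow> L2p (trunc T f)"
  unfolding L2p_def using L2_trunc by (auto simp: trunc_def)

lemma L2p_L2ep: "L2p f \<Longrightarrow> L2ep f"
  unfolding L2ep_def using L2p_trunc by blast

lemma L2_inner_bound: "\<bar>x \<bullet> y\<bar> \<le> (s * (norm x)\<^sup>2 + (norm y)\<^sup>2 / s) / 2" if "s > 0" for x y :: "real^'n"
proof -
  have "\<bar>x \<bullet> y\<bar> \<le> norm x * norm y" by (rule Cauchy_Schwarz_ineq2)
  then have a: "s * (2 * \<bar>x \<bullet> y\<bar>) \<le> s * (2 * (norm x * norm y))" using that by simp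
  have "2 * s * (norm x * norm y) \<le> s\<^sup>2 * (norm x)\<^sup>2 + (norm y)\<^sup>2"
    using sum_squares_ge_zero[of "s * norm x - norm y" 0]
    by (simp add: power2_eq_square algebra_simps)
  then have "s * (2 * \<bar>x \<bullet> y\<bar>) \<le> s\<^sup>2 * (norm x)\<^sup>2 + (norm y)\<^sup>2" using a by linarith
  then show ?thesis using that
    by (simp add: field_simps power2_eq_square)
qed

lemma L2_inner_int: assumes "L2 f" "L2 g" shows "integrable lborel (\<lambda>t. f t \<bullet> g t)"
proof -
  have i: "integrable lborel (\<lambda>t. (1 * (norm (f t))\<^sup>2 + (norm (g t))\<^sup>2 / 1) / 2)"
    using assms unfolding L2_def by auto
  have m: "(\<lambda>t. f t \<bullet> g t) \<in> borel_measurable borel"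
    using L2_meas[OF assms(1)] L2_meas[OF assms(2)] by measurable
  show ?thesis
    apply (rule Bochner_Integration.integrable_bound[OF i])
    using m apply simp
    using L2_inner_bound[of 1] by auto
qed

lemma nrm_ip: "nrm f = sqrt (ip f f)"
  unfolding nrm_def ip_def by (simp add: power2_norm_eq_inner)

lemma ip_AE: "f \<in> borel_measurable borel \<Longrightarrow> f' \<in> borel_measurable borel \<Longrightarrow>
  g \<in> borel_measurable borel \<Longrightarrow> g' \<in> borel_measurable borel \<Longrightarrow>
  AE t in lborel. f t = f' t \<Longrightarrow> AE t in lborel. g t = g' t \<Longrightarrow> ip f g = ip f' g'"
  unfolding ip_def by (rule integral_cong_AE) (auto elim!: AE_mp)

lemma nrm_AE: "f \<in> borel_measurable borel \<Longrightarrow> f' \<in> borel_measurable borel \<Longrightarrow>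
   AE t in lborel. f t = f' t \<Longrightarrow> nrm f = nrm f'"
  unfolding nrm_ip using ip_AE by metis

lemma ip_trunc_lim: assumes "L2 f" "L2 g"
  shows "(\<lambda>n. ip (trunc (real n) f) (trunc (real n) g)) \<longlonglongrightarrow> ip f g"
  unfolding ip_def
proof (rule integral_dominated_convergence[where w="\<lambda>t. \<bar>f t \<bullet> g t\<bar>"])
  have f: "f \<in> borel_measurable borel" and g: "g \<in> borel_measurable borel"
    using assms L2_meas by auto
  show "(\<lambda>t. f t \<bullet> g t) \<in> borel_measurable lborel" using f g by simp measurable
  show "(\<lambda>t. trunc (real i) f t \<bullet> trunc (real i) g t) \<in> borel_measurable lborel" for i
    using trunc_meas[OF f, of "real i"] trunc_meas[OF g, of "real i"] by simp measurable
  show "integrable lborel (\<lambda>t. \<bar>f t \<bullet> g t\<bar>)" using L2_inner_int[OF assms] by auto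
  show "AE t in lborel. norm (trunc (real i) f t \<bullet> trunc (real i) g t) \<le> \<bar>f t \<bullet> g t\<bar>" for i
    by (auto simp: trunc_def)
  show "AE t in lborel. (\<lambda>i. trunc (real i) f t \<bullet> trunc (real i) g t) \<longlonglongrightarrow> f t \<bullet> g t"
  proof (intro AE_I2)
    fix t :: real
    obtain N :: nat where "t \<le> real N" using real_arch_simple by blast
    then have "\<forall>\<^sub>F i in sequentially. f t \<bullet> g t = trunc (real i) f t \<bullet> trunc (real i) g t"
      unfolding eventually_sequentially trunc_def
      by (intro exI[of _ N]) auto
    then show "(\<lambda>i. trunc (real i) f t \<bullet> trunc (real i) g t) \<longlonglongrightarrow> f t \<bullet> g t"
      by (rule Lim_transform_eventually[OF tendsto_const])
  qed
qed

lemma CS: assumes "L2 f" "L2 g" "nrm f \<noteq> 0" "nrm g \<noteq> 0"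
  shows "\<bar>ip f g\<bar> \<le> nrm f * nrm g"
proof -
  define A where "A = (LINT t|lborel. (norm (f t))\<^sup>2)"
  define B where "B = (LINT t|lborel. (norm (g t))\<^sup>2)"
  have A0: "A \<ge> 0" "B \<ge> 0" unfolding A_def B_def by auto
  have nA: "nrm f = sqrt A" "nrm g = sqrt B" unfolding A_def B_def nrm_def by auto
  then have Ap: "A > 0" "B > 0" using assms A0 by auto
  define s where "s = sqrt B / sqrt A"
  have sp: "s > 0" using Ap unfolding s_def by auto
  have "\<bar>ip f g\<bar> \<le> (LINT t|lborel. \<bar>f t \<bullet> g t\<bar>)"
    unfolding ip_def by (rule integral_abs_bound)
  also have "\<dots> \<le> (LINT t|lborel. (s * (norm (f t))\<^sup>2 + (norm (g t))\<^sup>2 / s) / 2)"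
    apply (rule integral_mono)
    using L2_inner_int[OF assms(1,2)] assms(1,2) L2_inner_bound[OF sp] unfolding L2_def by auto
  also have "\<dots> = (s * A + B / s) / 2"
    using assms(1,2) unfolding L2_def A_def B_def by simp
  also have "\<dots> = sqrt A * sqrt B"
    using Ap A0 unfolding s_def by (simp add: field_simps)
  finally show ?thesis using nA by simp
qed

lemma nrm_trunc_le: assumes "L2 f" shows "nrm (trunc T f) \<le> nrm f"
  unfolding nrm_def
  apply (rule real_sqrt_le_mono, rule integral_mono)
  using assms L2_trunc[OF assms, of T] by (auto simp: L2_def trunc_def)

lemma ratio_bound: assumes "L2 f" "L2 g" "nrm f \<noteq> 0" "nrm g \<noteq> 0"
  shows "-1 \<le> ip f g / (nrm f * nrm g) \<and> ip f g / (nrm f * nrm g) \<le> 1"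
proof -
  have p: "nrm f * nrm g > 0" using assms(3,4) unfolding nrm_def
    by (simp add: less_le)
  have "\<bar>ip f g\<bar> \<le> nrm f * nrm g" by (rule CS[OF assms])
  then show ?thesis using p by (auto simp: abs_le_iff divide_le_eq le_divide_eq)
qed

lemma nrm_nonneg: "nrm f \<ge> 0" unfolding nrm_def by simp

theorem proposition9:
  fixes P :: "'n::finite signal \<Rightarrow> 'n signal"
  assumes "is_system P" and "causal P" and "stable P"
  shows "sangle P \<le> sangle_e P \<and> (0 \<le> sangle P \<and> sangle P \<le> pi / 2 \<longrightarrow> sangle P = sangle_e P)"
proof -
  have stP: "\<And>u. L2p u \<Longrightarrow> L2p (P u)" using assms(3) unfolding stable_def by blast
  have sysP: "\<And>u. L2ep u \<Longrightarrow> L2ep (P u)" using assms(1) unfolding is_system_def by blast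
  have caus: "\<And>u T. L2ep u \<Longrightarrow> T \<ge> 0 \<Longrightarrow> AE t in lborel. trunc T (P u) t = trunc T (P (trunc T u)) t"
    using assms(2) unfolding causal_def by blast
  have L2pL2: "\<And>u. L2p u \<Longrightarrow> L2 u" unfolding L2p_def by blast
  define S where "S = {ip u (P u) / (nrm u * nrm (P u)) | u.
       L2p u \<and> nrm u \<noteq> 0 \<and> nrm (P u) \<noteq> 0}"
  define Se where "Se = {ip (trunc T u) (trunc T (P u)) / (nrm (trunc T u) * nrm (trunc T (P u))) | u T.
       L2ep u \<and> T > 0 \<and> nrm (trunc T u) \<noteq> 0 \<and> nrm (trunc T (P u)) \<noteq> 0}"
  have sa: "sangle P = arccos (Inf S)" unfolding sangle_def S_def ..
  have sae: "sangle_e P = arccos (Inf Se)" unfolding sangle_e_def Se_def ..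
  have Sb: "\<And>x. x \<in> S \<Longrightarrow> -1 \<le> x \<and> x \<le> 1"
    unfolding S_def using ratio_bound L2pL2 stP by blast
  have Seb: "\<And>x. x \<in> Se \<Longrightarrow> -1 \<le> x \<and> x \<le> 1"
  proof -
    fix x assume "x \<in> Se"
    then obtain u T where x: "x = ip (trunc T u) (trunc T (P u)) / (nrm (trunc T u) * nrm (trunc T (P u)))"
      and h: "L2ep u" "T > 0" "nrm (trunc T u) \<noteq> 0" "nrm (trunc T (P u)) \<noteq> 0"
      unfolding Se_def by blast
    have "L2p (trunc T u)" "L2p (trunc T (P u))" using h(1,2) sysP[OF h(1)] unfolding L2ep_def by auto
    then have "L2 (trunc T u)" "L2 (trunc T (P u))" using L2pL2 by auto
    then show "-1 \<le> x \<and> x \<le> 1" using ratio_bound h x by blast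
  qed
  have key1: "\<exists>v bT. L2p v \<and> nrm v \<noteq> 0 \<and> nrm (P v) \<noteq> 0 \<and> 0 < bT \<and> bT \<le> nrm (P v)
      \<and> y = ip v (P v) / (nrm v * bT)" if "y \<in> Se" for y
  proof -
    from that obtain u T where y: "y = ip (trunc T u) (trunc T (P u)) / (nrm (trunc T u) * nrm (trunc T (P u)))"
      and h: "L2ep u" "T > 0" "nrm (trunc T u) \<noteq> 0" "nrm (trunc T (P u)) \<noteq> 0"
      unfolding Se_def by blast
    define v where "v = trunc T u"
    have v: "L2p v" using h unfolding v_def L2ep_def by auto
    have Pv: "L2p (P v)" using stP[OF v] .
    have m1: "trunc T (P u) \<in> borel_measurable borel"
    proof -
      have "L2p (trunc T (P u))" using sysP[OF h(1)] h(2) unfolding L2ep_def by auto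
      then show ?thesis using L2_meas[OF L2pL2] by blast
    qed
    have m2: "trunc T (P v) \<in> borel_measurable borel"
      using Pv L2pL2 L2_meas trunc_meas by blast
    have mv: "v \<in> borel_measurable borel" using v L2pL2 L2_meas by blast
    have ae: "AE t in lborel. trunc T (P u) t = trunc T (P v) t"
      using caus[OF h(1)] h(2) unfolding v_def by auto
    have c1: "ip v (trunc T (P u)) = ip v (trunc T (P v))"
      by (rule ip_AE[OF mv mv m1 m2]) (use ae in auto)
    have "(\<lambda>t. v t \<bullet> trunc T (P v) t) = (\<lambda>t. v t \<bullet> P v t)"
      by (auto simp: v_def trunc_def)
    then have c1': "ip v (trunc T (P v)) = ip v (P v)" unfolding ip_def by simp
    have c2: "nrm (trunc T (P u)) = nrm (trunc T (P v))" by (rule nrm_AE[OF m1 m2 ae])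
    have c3: "nrm (trunc T (P v)) \<le> nrm (P v)" using nrm_trunc_le L2pL2[OF Pv] by blast
    show ?thesis
      apply (rule exI[of _ v], rule exI[of _ "nrm (trunc T (P u))"])
      using v c1 c1' c2 c3 h y nrm_nonneg[of "trunc T (P u)"] unfolding v_def[symmetric]
      by (auto simp: less_le)
  qed
  have key2: "Inf Se \<le> x \<and> Se \<noteq> {}" if "x \<in> S" for x
  proof -
    from that obtain u where x: "x = ip u (P u) / (nrm u * nrm (P u))"
      and h: "L2p u" "nrm u \<noteq> 0" "nrm (P u) \<noteq> 0" unfolding S_def by blast
    define w where "w = P u"
    have u2: "L2 u" using L2pL2 h by blast
    have w2: "L2 w" using L2pL2 stP h unfolding w_def by blast
    have ue: "L2ep u" using L2p_L2ep h by blast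
    have a: "(\<lambda>n. nrm (trunc (real n) u)) \<longlonglongrightarrow> nrm u"
      unfolding nrm_ip by (intro tendsto_real_sqrt ip_trunc_lim u2)
    have b: "(\<lambda>n. nrm (trunc (real n) w)) \<longlonglongrightarrow> nrm w"
      unfolding nrm_ip by (intro tendsto_real_sqrt ip_trunc_lim w2)
    have c: "(\<lambda>n. ip (trunc (real n) u) (trunc (real n) w)) \<longlonglongrightarrow> ip u w"
      by (intro ip_trunc_lim u2 w2)
    have r: "(\<lambda>n. ip (trunc (real n) u) (trunc (real n) w) / (nrm (trunc (real n) u) * nrm (trunc (real n) w)))
        \<longlonglongrightarrow> x"
      unfolding x w_def[symmetric]
      by (intro tendsto_divide tendsto_mult a b c) (use h w_def in auto)
    have ea: "\<forall>\<^sub>F n in sequentially. nrm (trunc (real n) u) \<noteq> 0"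
      using tendsto_imp_eventually_ne[OF a h(2)] .
    have eb: "\<forall>\<^sub>F n in sequentially. nrm (trunc (real n) w) \<noteq> 0"
      using tendsto_imp_eventually_ne[OF b] h(3) unfolding w_def by blast
    have ep: "\<forall>\<^sub>F n in sequentially. real n > 0"
      unfolding eventually_sequentially by (intro exI[of _ 1]) auto
    have ev: "\<forall>\<^sub>F n in sequentially. ip (trunc (real n) u) (trunc (real n) w) / (nrm (trunc (real n) u) * nrm (trunc (real n) w)) \<in> Se"
      using ea eb ep
    proof eventually_elim
      case (elim n)
      then show ?case unfolding Se_def w_def using ue by blast
    qed
    have bdd: "bdd_below Se" using Seb unfolding bdd_below_def by blast
    have "\<forall>\<^sub>F n in sequentially. Inf Se \<le> ip (trunc (real n) u) (trunc (real n) w) / (nrm (trunc (real n) u) * nrm (trunc (real n) w))"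
      using ev by eventually_elim (use bdd cInf_lower in blast)
    then have "Inf Se \<le> x" by (rule tendsto_lowerbound[OF r]) simp
    moreover have "Se \<noteq> {}" using ev eventually_happens' by fastforce
    ultimately show ?thesis by blast
  qed
  show ?thesis
  proof (cases "S = {}")
    case True
    have "Se = {}"
    proof (rule ccontr)
      assume "Se \<noteq> {}"
      then obtain y where "y \<in> Se" by blast
      from key1[OF this] obtain v where "L2p v" "nrm v \<noteq> 0" "nrm (P v) \<noteq> 0" by blast
      then have "ip v (P v) / (nrm v * nrm (P v)) \<in> S" unfolding S_def by blast
      then show False using True by blast
    qed
    then show ?thesis using True sa sae by simp
  next
    case False
    then obtain x0 where x0: "x0 \<in> S" by blast
    have SeNE: "Se \<noteq> {}" using key2[OF x0] by blast
    have bddS: "bdd_below S" using Sb unfolding bdd_below_def by blast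
    have h1: "Inf Se \<le> Inf S" using key2 False by (intro cInf_greatest) auto
    have h2: "-1 \<le> Inf Se" using Seb SeNE by (intro cInf_greatest) auto
    have h3: "Inf S \<le> 1" using cInf_lower[OF x0 bddS] Sb[OF x0] by linarith
    have part1: "sangle P \<le> sangle_e P" unfolding sa sae by (rule arccos_le_arccos[OF h2 h1 h3])
    have part2: "sangle P = sangle_e P" if le: "sangle P \<le> pi / 2"
    proof -
      have nn: "0 \<le> Inf S"
      proof (rule ccontr)
        assume "\<not> 0 \<le> Inf S"
        then have "arccos 0 < arccos (Inf S)" using h1 h2 by (intro arccos_less_arccos) auto
        then show False using le sa by simp
      qed
      have "Inf S \<le> Inf Se"
      proof (rule cInf_greatest[OF SeNE])
        fix y assume "y \<in> Se"
        from key1[OF this] obtain v bT where v: "L2p v" "nrm v \<noteq> 0" "nrm (P v) \<noteq> 0" "0 < bT"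
          "bT \<le> nrm (P v)" and y: "y = ip v (P v) / (nrm v * bT)" by blast
        have xs: "ip v (P v) / (nrm v * nrm (P v)) \<in> S" unfolding S_def using v by blast
        have i1: "Inf S \<le> ip v (P v) / (nrm v * nrm (P v))" using cInf_lower[OF xs bddS] .
        have pa: "nrm v > 0" "nrm (P v) > 0" using v nrm_nonneg[of v] nrm_nonneg[of "P v"] by auto
        have ipn: "ip v (P v) \<ge> 0"
        proof (rule ccontr)
          assume "\<not> ip v (P v) \<ge> 0"
          then have "ip v (P v) / (nrm v * nrm (P v)) < 0" using pa by (simp add: divide_neg_pos)
          then show False using i1 nn by linarith
        qed
        have "ip v (P v) / (nrm v * nrm (P v)) \<le> ip v (P v) / (nrm v * bT)"
          by (rule divide_left_mono) (use ipn pa v in auto)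
        then show "Inf S \<le> y" using i1 y by linarith
      qed
      then show ?thesis using h1 sa sae by simp
    qed
    show ?thesis using part1 part2 by blast
  qed
qed

end
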